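(* Let $n\ge 3$ and let $\mathcal{A}$ be an arrangement of $(n-2)$-planes in $\mathbb{P}^n$ whose incidence graph $\Gamma(\mathcal{A})$ is isomorphic to the complete bipartite graph $K_{a,b}$, where $a,b$ are positive integers with $a\le b\le 2$ or $2\le a\le b$. Then $\mathcal{A}$ is a cone over an arrangement $\mathcal{B}$ of lines in $\mathbb{P}^3$ with $\Gamma(\mathcal{B})\cong K_{a,b}$; that is, there exist an $(n-4)$-dimensional linear subspace $V\subset\mathbb{P}^n$, a $3$-dimensional linear subspace $\Lambda\subset\mathbb{P}^n$ with $V\cap\Lambda=\emptyset$ (so $\Lambda\cong\mathbb{P}^3$), and an arrangement $\mathcal{B}$ of lines in $\Lambda$ with $\Gamma(\mathcal{B})\cong K_{a,b}$, such that $\mathcal{A}=\{\operatorname{span}(V\cup \ell) : \ell\in\mathcal{B}\}$.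
   Context: A subspace arrangement is a finite collection of linear subspaces of a projective space with no inclusions among distinct members. The incidence graph $\Gamma(\mathcal{A})$ has vertex set $\mathcal{A}$ and an edge between $X\ne Y$ iff $\dim(X\cap Y)$ exceeds the expected dimension, which for two $(n-2)$-planes in $\mathbb{P}^n$ is $n-4$ (the empty set has dimension $-1$; so for lines in $\mathbb{P}^3$ an edge means the two lines meet). $K_{a,b}$ is the complete bipartite graph with parts of sizes $a$ and $b$. For $n=3$, $V$ is empty. *)

theory Defs
  imports Complex_Main
begin

text \<open>Projective space P^n over the complex numbers is modelled via the vector space
  C^(n+1), realised as the functions nat => complex vanishing at every index > n.
  A projective linear subspace of projective dimension p corresponds to a complex
  linear subspace of vector dimension p+1 (the empty subspace is the zero subspace).\<close>

definition amb :: "nat \<Rightarrow> (nat \<Rightarrow> complex) set" where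
  "amb n = {v. \<forall>i>n. v i = 0}"

definition cspan :: "(nat \<Rightarrow> complex) set \<Rightarrow> (nat \<Rightarrow> complex) set" where
  "cspan S = {v. \<exists>F c. finite F \<and> F \<subseteq> S \<and> v = (\<lambda>i. \<Sum>x\<in>F. c x * x i)}"

definition cindep :: "(nat \<Rightarrow> complex) set \<Rightarrow> bool" where
  "cindep S \<longleftrightarrow> (\<forall>F c. finite F \<and> F \<subseteq> S \<and> (\<forall>i. (\<Sum>x\<in>F. c x * x i) = 0)
                    \<longrightarrow> (\<forall>x\<in>F. c x = 0))"

definition has_vdim :: "(nat \<Rightarrow> complex) set \<Rightarrow> nat \<Rightarrow> bool" where
  "has_vdim W d \<longleftrightarrow> (\<exists>B. finite B \<and> cindep B \<and> cspan B = W \<and> card B = d)"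

definition arrangement :: "(nat \<Rightarrow> complex) set \<Rightarrow> nat \<Rightarrow> (nat \<Rightarrow> complex) set set \<Rightarrow> bool" where
  "arrangement M d A \<longleftrightarrow> finite A \<and> (\<forall>X\<in>A. X \<subseteq> M \<and> has_vdim X d)
     \<and> (\<forall>X\<in>A. \<forall>Y\<in>A. X \<noteq> Y \<longrightarrow> \<not> X \<subseteq> Y)"

definition iso_Kab :: "'v set \<Rightarrow> ('v \<Rightarrow> 'v \<Rightarrow> bool) \<Rightarrow> nat \<Rightarrow> nat \<Rightarrow> bool" where
  "iso_Kab A E a b \<longleftrightarrow> (\<exists>P Q. P \<inter> Q = {} \<and> P \<union> Q = A \<and> finite P \<and> finite Q
      \<and> card P = a \<and> card Q = b
      \<and> (\<forall>X\<in>A. \<forall>Y\<in>A. X \<noteq> Y \<longrightarrow> (E X Y \<longleftrightarrow> (X \<in> P \<and> Y \<in> Q) \<or> (X \<in> Q \<and> Y \<in> P))))"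

text \<open>Incidence edge for two (n-2)-planes in P^n: projective dimension of the
  intersection exceeds n-4, i.e. vector dimension exceeds n-3.\<close>
definition edge_codim2 :: "nat \<Rightarrow> (nat \<Rightarrow> complex) set \<Rightarrow> (nat \<Rightarrow> complex) set \<Rightarrow> bool" where
  "edge_codim2 n X Y \<longleftrightarrow> (\<exists>d. has_vdim (X \<inter> Y) d \<and> d > n - 3)"

text \<open>Incidence edge for two lines in P^3: they meet (projective dimension of the
  intersection exceeds -1, i.e. vector dimension exceeds 0).\<close>
definition edge_lines :: "(nat \<Rightarrow> complex) set \<Rightarrow> (nat \<Rightarrow> complex) set \<Rightarrow> bool" where
  "edge_lines X Y \<longleftrightarrow> (\<exists>d. has_vdim (X \<inter> Y) d \<and> d > 0)"

end

theory Submission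
  imports Defs "HOL-Library.Function_Algebras"
begin


definition sc :: "complex \<Rightarrow> (nat \<Rightarrow> complex) \<Rightarrow> (nat \<Rightarrow> complex)" where
  "sc c v = (\<lambda>i. c * v i)"

interpretation VS: vector_space sc
  by unfold_locales (auto simp: sc_def fun_eq_iff algebra_simps)

lemma sum_fun_app: "(\<Sum>x\<in>F. f x) i = (\<Sum>x\<in>F. (f x i :: complex))"
  by (induct F rule: infinite_finite_induct) auto

lemma cspan_eq: "cspan S = VS.span S"
  unfolding cspan_def VS.span_explicit
  by (auto simp: sum_fun_app sc_def fun_eq_iff)

lemma cindep_eq: "cindep S = VS.independent S"
  unfolding cindep_def VS.independent_explicit_module
  by (auto simp: sum_fun_app sc_def fun_eq_iff)

lemma has_vdim_eq: "has_vdim W d \<longleftrightarrow> (\<exists>B. finite B \<and> VS.independent B \<and> VS.span B = W \<and> card B = d)"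
  unfolding has_vdim_def cspan_eq cindep_eq ..

definition ev :: "nat \<Rightarrow> nat \<Rightarrow> complex" where "ev k = (\<lambda>j. if j = k then 1 else 0)"
definition EE :: "nat \<Rightarrow> (nat \<Rightarrow> complex) set" where "EE n = ev ` {..n}"

lemma subspace_amb: "VS.subspace (amb n)"
  unfolding VS.subspace_def amb_def by (auto simp: sc_def)

lemma inj_ev: "inj ev"
  unfolding inj_def ev_def fun_eq_iff by (metis one_neq_zero)

lemma card_EE: "card (EE n) = Suc n"
  unfolding EE_def by (simp add: card_image inj_on_subset[OF inj_ev])

lemma finite_EE: "finite (EE n)" unfolding EE_def by simp

lemma span_EE: "VS.span (EE n) = amb n"
proof
  show "VS.span (EE n) \<subseteq> amb n"
    apply (rule VS.span_minimal)
     apply (auto simp: EE_def ev_def amb_def)[1]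
    by (rule subspace_amb)
  show "amb n \<subseteq> VS.span (EE n)"
  proof
    fix v assume v: "v \<in> amb n"
    have "(\<Sum>k\<in>{..n}. sc (v k) (ev k)) \<in> VS.span (EE n)"
      by (intro VS.span_sum VS.span_scale VS.span_base) (auto simp: EE_def)
    moreover have "(\<Sum>k\<in>{..n}. sc (v k) (ev k)) = v"
    proof (rule ext)
      fix x
      have "(\<Sum>k\<in>{..n}. sc (v k) (ev k)) x = (\<Sum>k\<in>{..n}. if x = k then v k else 0)"
        unfolding sum_fun_app sc_def ev_def by (rule sum.cong) auto
      also have "\<dots> = v x" using v by (auto simp: amb_def)
      finally show "(\<Sum>k\<in>{..n}. sc (v k) (ev k)) x = v x" .
    qed
    ultimately show "v \<in> VS.span (EE n)" by simp
  qed
qed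

lemma indep_EE: "VS.independent (EE n)"
  unfolding VS.independent_explicit_module
proof (intro allI impI)
  fix t u v assume t: "finite t" "t \<subseteq> EE n" and s: "(\<Sum>v\<in>t. sc (u v) v) = 0" and vt: "v \<in> t"
  then obtain k where vk: "v = ev k" by (auto simp: EE_def)
  have "(\<Sum>w\<in>t. sc (u w) w) k = u v"
  proof -
    have "(\<Sum>w\<in>t. sc (u w) w) k = (\<Sum>w\<in>t. u w * w k)" by (simp add: sum_fun_app sc_def)
    also have "\<dots> = u v * v k + (\<Sum>w\<in>t-{v}. u w * w k)" using t vt by (simp add: sum.remove)
    also have "(\<Sum>w\<in>t-{v}. u w * w k) = 0"
    proof (rule sum.neutral, rule ballI)
      fix w assume "w \<in> t - {v}"
      then obtain j where "w = ev j" "j \<noteq> k" using t vk by (auto simp: EE_def)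
      then show "u w * w k = 0" by (simp add: ev_def)
    qed
    finally show ?thesis by (simp add: vk ev_def)
  qed
  then show "u v = 0" using s by simp
qed

lemma dim_amb: "VS.dim (amb n) = Suc n"
  using VS.dim_span_eq_card_independent[OF indep_EE] by (simp add: span_EE card_EE)

lemma indep_fin: "B \<subseteq> amb n \<Longrightarrow> VS.independent B \<Longrightarrow> finite B \<and> card B \<le> Suc n"
  using VS.independent_span_bound[OF finite_EE, of B n] by (simp add: span_EE card_EE)

lemma basis_fin:
  assumes "S \<subseteq> amb n"
  obtains B where "B \<subseteq> S" "VS.independent B" "S \<subseteq> VS.span B" "card B = VS.dim S" "finite B"
  using VS.basis_exists[of S] indep_fin assms by (metis order_trans)

lemma dim_le_amb: "S \<subseteq> amb n \<Longrightarrow> VS.dim S \<le> Suc n"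
  using VS.dim_le_card[OF _ finite_EE, of S n] by (simp add: span_EE card_EE)

lemma hv_iff:
  assumes "S \<subseteq> amb n" "VS.subspace S"
  shows "has_vdim S d \<longleftrightarrow> d = VS.dim S"
proof
  assume "has_vdim S d"
  then obtain B where "finite B" "VS.independent B" "VS.span B = S" "card B = d"
    by (auto simp: has_vdim_eq)
  then show "d = VS.dim S" using VS.dim_span_eq_card_independent by metis
next
  assume d: "d = VS.dim S"
  obtain B where "B \<subseteq> S" "VS.independent B" "S \<subseteq> VS.span B" "card B = VS.dim S" "finite B"
    using basis_fin[OF assms(1)] by metis
  moreover then have "VS.span B = S" using VS.span_subspace assms(2) by metis
  ultimately show "has_vdim S d" unfolding has_vdim_eq d by blast
qed

lemma dim_mono:
  assumes "S \<subseteq> T" "T \<subseteq> amb n"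
  shows "VS.dim S \<le> VS.dim T"
proof -
  obtain C where "C \<subseteq> T" "VS.independent C" "T \<subseteq> VS.span C" "card C = VS.dim T" "finite C"
    using basis_fin[OF assms(2)] by metis
  then show ?thesis using VS.dim_le_card[of S C] assms(1) by auto
qed

lemma indep_card_le:
  assumes "B \<subseteq> T" "T \<subseteq> amb n" "VS.independent B"
  shows "card B \<le> VS.dim T"
proof -
  obtain C where "C \<subseteq> T" "VS.independent C" "T \<subseteq> VS.span C" "card C = VS.dim T" "finite C"
    using basis_fin[OF assms(2)] by metis
  then show ?thesis using VS.independent_span_bound[of C B] assms by auto
qed

lemma dim_eq_sub:
  assumes "S \<subseteq> T" "T \<subseteq> amb n" "VS.subspace S" "VS.dim T \<le> VS.dim S"
  shows "S = T"
proof (rule ccontr)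
  assume "S \<noteq> T"
  then obtain t where t: "t \<in> T" "t \<notin> S" using assms(1) by blast
  obtain B where B: "B \<subseteq> S" "VS.independent B" "S \<subseteq> VS.span B" "card B = VS.dim S" "finite B"
    using basis_fin[of S n] assms by (metis order_trans)
  have "VS.span B = S" using VS.span_subspace B assms(3) by metis
  then have "VS.independent (insert t B)" using VS.independent_insertI B t by metis
  then have "card (insert t B) \<le> VS.dim T"
    using indep_card_le[of "insert t B" T n] B t assms by blast
  moreover have "t \<notin> B" using B(1) t(2) by blast
  then have "card (insert t B) = Suc (card B)" using B(5) by simp
  ultimately show False using B assms by simp
qed



lemma sc_inv: "k \<noteq> 0 \<Longrightarrow> sc (inverse k) (sc k b) = b"
  by (simp add: sc_def fun_eq_iff)

lemma sc_zero: "sc 0 b = 0"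
  by (simp add: sc_def fun_eq_iff)

lemma span_disj:
  assumes C: "finite C" "VS.independent C" and AB: "A \<subseteq> C" "B \<subseteq> C" "A \<inter> B = {}"
  shows "VS.span A \<inter> VS.span B = {0}"
proof -
  have "finite B" using C AB finite_subset by blast
  then show ?thesis using AB
  proof (induct B)
    case empty then show ?case using VS.span_zero by auto
  next
    case (insert b B)
    have IH: "VS.span A \<inter> VS.span B = {0}" using insert by auto
    show ?case
    proof (rule set_eqI, rule iffI)
      fix x assume x: "x \<in> VS.span A \<inter> VS.span (insert b B)"
      then have "x \<in> VS.span (insert b B)" by blast
      then obtain k where k: "x - sc k b \<in> VS.span B" unfolding VS.span_breakdown_eq by blast
      show "x \<in> {0}"
      proof (cases "k = 0")
        case True then have "x \<in> VS.span B" using k by (simp add: sc_zero)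
        then show ?thesis using IH x by auto
      next
        case False
        have x1: "x \<in> VS.span (A \<union> B)" using x VS.span_mono[of A "A\<union>B"] by blast
        have x2: "x - sc k b \<in> VS.span (A \<union> B)" using k VS.span_mono[of B "A\<union>B"] by blast
        have "x - (x - sc k b) \<in> VS.span (A \<union> B)" by (rule VS.span_diff[OF x1 x2])
        then have "sc k b \<in> VS.span (A \<union> B)" by simp
        then have "sc (inverse k) (sc k b) \<in> VS.span (A \<union> B)" by (rule VS.span_scale)
        then have "b \<in> VS.span (A \<union> B)" unfolding sc_inv[OF False] .
        moreover have "A \<union> B \<subseteq> C - {b}" using insert by auto
        ultimately have "b \<in> VS.span (C - {b})" using VS.span_mono[of "A \<union> B" "C - {b}"] by blast
        moreover have "b \<in> C" using insert by auto
        ultimately have "VS.dependent C" unfolding VS.dependent_def by blast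
        then show ?thesis using C by simp
      qed
    next
      fix x :: "nat \<Rightarrow> complex" assume "x \<in> {0}" then show "x \<in> VS.span A \<inter> VS.span (insert b B)"
        using VS.span_zero by auto
    qed
  qed
qed

lemma indep_union:
  assumes A: "VS.independent A" and B: "VS.independent B" "finite B"
    and D: "VS.span A \<inter> VS.span B = {0}"
  shows "VS.independent (A \<union> B)"
  using B(2) B(1) D
proof (induct B rule: finite_induct)
  case empty then show ?case using A by simp
next
  case (insert b B)
  have iB: "VS.independent B" "b \<notin> VS.span B"
    using insert(1,2,4) VS.independent_insert by metis+
  have DB: "VS.span A \<inter> VS.span B = {0}"
    using insert(5) VS.span_mono[of B "insert b B"] VS.span_zero[of A] VS.span_zero[of B] by blast
  have IH: "VS.independent (A \<union> B)" using insert(3) iB DB by blast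
  have "b \<notin> VS.span (A \<union> B)"
  proof
    assume "b \<in> VS.span (A \<union> B)"
    then obtain x y where xy: "b = x + y" "x \<in> VS.span A" "y \<in> VS.span B"
      unfolding VS.span_Un by blast
    have "x = b - y" using xy by simp
    moreover have "b - y \<in> VS.span (insert b B)"
    proof (rule VS.span_diff)
      show "b \<in> VS.span (insert b B)" by (rule VS.span_base) simp
      show "y \<in> VS.span (insert b B)" using xy VS.span_mono[of B "insert b B"] by blast
    qed
    ultimately have "x \<in> VS.span A \<inter> VS.span (insert b B)" using xy by simp
    then have "x = 0" using insert(5) by blast
    then show False using xy iB by simp
  qed
  then show ?case using IH VS.independent_insertI by simp
qed

lemma grass:
  assumes S: "S \<subseteq> amb n" "VS.subspace S" and T: "T \<subseteq> amb n" "VS.subspace T"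
  shows "VS.dim (VS.span (S \<union> T)) + VS.dim (S \<inter> T) = VS.dim S + VS.dim T"
proof -
  obtain I where I: "I \<subseteq> S \<inter> T" "VS.independent I" "S \<inter> T \<subseteq> VS.span I"
     "card I = VS.dim (S \<inter> T)" "finite I"
    using basis_fin[of "S \<inter> T" n] S by blast
  obtain BS where BS: "I \<subseteq> BS" "BS \<subseteq> S" "VS.independent BS" "S \<subseteq> VS.span BS"
    using VS.maximal_independent_subset_extend[of I S] I by blast
  obtain BT where BT: "I \<subseteq> BT" "BT \<subseteq> T" "VS.independent BT" "T \<subseteq> VS.span BT"
    using VS.maximal_independent_subset_extend[of I T] I by blast
  have fS: "finite BS" using indep_fin[of BS n] BS S by blast
  have fT: "finite BT" using indep_fin[of BT n] BT T by blast
  have cS: "card BS = VS.dim S" using VS.basis_card_eq_dim[OF BS(2) BS(4) BS(3)] .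
  have cT: "card BT = VS.dim T" using VS.basis_card_eq_dim[OF BT(2) BT(4) BT(3)] .
  define BT' where "BT' = BT - I"
  have spS: "VS.span BS \<subseteq> S" using VS.span_minimal[OF BS(2) S(2)] .
  have spT: "VS.span BT' \<subseteq> T" using VS.span_minimal[of BT' T] BT T unfolding BT'_def by blast
  have dI: "VS.span I \<inter> VS.span BT' = {0}"
    using span_disj[OF fT BT(3), of I BT'] BT unfolding BT'_def by blast
  have D: "VS.span BS \<inter> VS.span BT' = {0}"
  proof -
    have "VS.span BS \<inter> VS.span BT' \<subseteq> VS.span I \<inter> VS.span BT'" using spS spT I by blast
    then show ?thesis using dI VS.span_zero[of BS] VS.span_zero[of BT'] by blast
  qed
  have fT': "finite BT'" using fT unfolding BT'_def by simp
  have iT': "VS.independent BT'" using VS.independent_mono[OF BT(3)] unfolding BT'_def by blast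
  have ind: "VS.independent (BS \<union> BT')" using indep_union[OF BS(3) iT' fT' D] .
  have sp: "VS.span (BS \<union> BT') = VS.span (S \<union> T)"
  proof (rule VS.span_eq[THEN iffD2], rule conjI)
    show "BS \<union> BT' \<subseteq> VS.span (S \<union> T)" using BS BT VS.span_superset[of "S \<union> T"] unfolding BT'_def by blast
    have "BT \<subseteq> BS \<union> BT'" using BS unfolding BT'_def by blast
    then have "T \<subseteq> VS.span (BS \<union> BT')" using BT VS.span_mono[of BT "BS \<union> BT'"] by blast
    moreover have "S \<subseteq> VS.span (BS \<union> BT')" using BS VS.span_mono[of BS "BS \<union> BT'"] by blast
    ultimately show "S \<union> T \<subseteq> VS.span (BS \<union> BT')" by blast
  qed
  have disj: "BS \<inter> BT' = {}"
  proof -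
    have "BS \<inter> BT' \<subseteq> {0}" using D VS.span_superset[of BS] VS.span_superset[of BT'] by blast
    moreover have "0 \<notin> BS" using BS(3) VS.dependent_zero[of BS] by blast
    ultimately show ?thesis by blast
  qed
  have "VS.dim (VS.span (S \<union> T)) = card (BS \<union> BT')"
    using VS.dim_span_eq_card_independent[OF ind] sp by simp
  also have "\<dots> = card BS + card BT'" using card_Un_disjoint[OF fS fT' disj] .
  also have "card BT' = card BT - card I" unfolding BT'_def using card_Diff_subset[OF I(5) BT(1)] .
  finally show ?thesis using card_mono[OF fT BT(1)] cS cT I(4) by simp
qed



lemma hv_sub: "has_vdim X d \<Longrightarrow> VS.subspace X"
  unfolding has_vdim_eq by auto

lemma span_sub_amb: "S \<subseteq> amb n \<Longrightarrow> VS.span S \<subseteq> amb n"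
  using VS.span_minimal subspace_amb by blast

lemma edge2_iff:
  assumes "X \<subseteq> amb n" "VS.subspace X" "VS.subspace Y"
  shows "edge_codim2 n X Y \<longleftrightarrow> n - 3 < VS.dim (X \<inter> Y)"
proof -
  have "X \<inter> Y \<subseteq> amb n" "VS.subspace (X \<inter> Y)" using assms VS.subspace_inter[of X Y] by auto
  then show ?thesis unfolding edge_codim2_def using hv_iff[of "X \<inter> Y" n] by auto
qed

lemma edgel_iff:
  assumes "X \<subseteq> amb n" "VS.subspace X" "VS.subspace Y"
  shows "edge_lines X Y \<longleftrightarrow> 0 < VS.dim (X \<inter> Y)"
proof -
  have "X \<inter> Y \<subseteq> amb n" "VS.subspace (X \<inter> Y)" using assms VS.subspace_inter[of X Y] by auto
  then show ?thesis unfolding edge_lines_def using hv_iff[of "X \<inter> Y" n] by auto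
qed

lemma dim_zero_space: "VS.dim {0::nat\<Rightarrow>complex} = 0"
  using VS.dim_span[of "{}"] VS.dim_eq_card_independent[OF VS.independent_empty] by simp

lemma int_lower:
  assumes "X \<subseteq> amb n" "VS.subspace X" "Y \<subseteq> amb n" "VS.subspace Y"
    "VS.dim X = n - 1" "VS.dim Y = n - 1" "n \<ge> 3"
  shows "n - 3 \<le> VS.dim (X \<inter> Y)"
proof -
  have "VS.dim (VS.span (X \<union> Y)) \<le> Suc n"
  proof (rule dim_le_amb, rule span_sub_amb)
    show "X \<union> Y \<subseteq> amb n" using assms by blast
  qed
  then show ?thesis using grass[OF assms(1-4)] assms by linarith
qed

lemma keyK:
  assumes X1: "X1 \<subseteq> amb n" "VS.subspace X1"
    and X2: "X2 \<subseteq> amb n" "VS.subspace X2"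
    and Y: "Y \<subseteq> amb n" "VS.subspace Y" "VS.dim Y = n - 1"
    and n: "n \<ge> 3"
    and d12: "VS.dim (X1 \<inter> X2) \<le> n - 3"
    and d1: "n - 2 \<le> VS.dim (Y \<inter> X1)" and d2: "n - 2 \<le> VS.dim (Y \<inter> X2)"
  shows "X1 \<inter> X2 \<subseteq> Y"
proof -
  let ?S1 = "Y \<inter> X1" and ?S2 = "Y \<inter> X2"
  have s1: "?S1 \<subseteq> amb n" "VS.subspace ?S1" using X1 Y VS.subspace_inter[of Y X1] by auto
  have s2: "?S2 \<subseteq> amb n" "VS.subspace ?S2" using X2 Y VS.subspace_inter[of Y X2] by auto
  have g: "VS.dim (VS.span (?S1 \<union> ?S2)) + VS.dim (?S1 \<inter> ?S2) = VS.dim ?S1 + VS.dim ?S2"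
    using grass[OF s1 s2] .
  have "VS.span (?S1 \<union> ?S2) \<subseteq> Y" using VS.span_minimal[of "?S1 \<union> ?S2" Y] Y by blast
  then have "VS.dim (VS.span (?S1 \<union> ?S2)) \<le> VS.dim Y" using dim_mono[of _ Y n] Y by blast
  then have le: "n - 3 \<le> VS.dim (?S1 \<inter> ?S2)" using g d1 d2 Y n by linarith
  have eq: "?S1 \<inter> ?S2 = X1 \<inter> X2"
  proof (rule dim_eq_sub)
    show "?S1 \<inter> ?S2 \<subseteq> X1 \<inter> X2" by blast
    show "X1 \<inter> X2 \<subseteq> amb n" using X1 by blast
    show "VS.subspace (?S1 \<inter> ?S2)" using s1 s2 VS.subspace_inter[of ?S1 ?S2] by blast
    show "VS.dim (X1 \<inter> X2) \<le> VS.dim (?S1 \<inter> ?S2)" using le d12 by linarith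
  qed
  then show ?thesis by blast
qed



lemma cone:
  assumes n: "n \<ge> 3"
    and V: "V \<subseteq> amb n" "VS.subspace V" "VS.dim V = n - 3"
    and VA: "\<forall>X\<in>A. V \<subseteq> X"
    and arr: "arrangement (amb n) (n - 1) A"
    and iso: "iso_Kab A (edge_codim2 n) a b"
  shows "\<exists>\<Lambda> B. V \<subseteq> amb n \<and> has_vdim V (n - 3)
           \<and> \<Lambda> \<subseteq> amb n \<and> has_vdim \<Lambda> 4
           \<and> V \<inter> \<Lambda> = {\<lambda>i. 0}
           \<and> arrangement \<Lambda> 2 B
           \<and> iso_Kab B edge_lines a b
           \<and> A = {cspan (V \<union> l) | l. l \<in> B}"
proof -
  have Amem: "\<And>X. X \<in> A \<Longrightarrow> X \<subseteq> amb n \<and> VS.subspace X \<and> VS.dim X = n - 1"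
  proof -
    fix X assume "X \<in> A"
    then have x: "X \<subseteq> amb n" and h: "has_vdim X (n - 1)" using arr unfolding arrangement_def by auto
    have s: "VS.subspace X" by (rule hv_sub[OF h])
    have "n - 1 = VS.dim X" using hv_iff[OF x s] h by blast
    then show "X \<subseteq> amb n \<and> VS.subspace X \<and> VS.dim X = n - 1" using x s by simp
  qed
  obtain BV where BV: "BV \<subseteq> V" "VS.independent BV" "V \<subseteq> VS.span BV" "card BV = VS.dim V" "finite BV"
    using basis_fin[OF V(1)] by metis
  have spBV: "VS.span BV = V" using VS.span_subspace[OF BV(1) BV(3) V(2)] .
  obtain BB where BB: "BV \<subseteq> BB" "BB \<subseteq> amb n" "VS.independent BB" "amb n \<subseteq> VS.span BB"
    using VS.maximal_independent_subset_extend[of BV "amb n"] BV V by blast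
  have fBB: "finite BB" using indep_fin[OF BB(2) BB(3)] by blast
  have cBB: "card BB = Suc n" using VS.basis_card_eq_dim[OF BB(2) BB(4) BB(3)] dim_amb by simp
  define L where "L = VS.span (BB - BV)"
  have Lamb: "L \<subseteq> amb n" unfolding L_def using span_sub_amb BB(2) by blast
  have Lsub: "VS.subspace L" unfolding L_def by simp
  have iL: "VS.independent (BB - BV)" using VS.independent_mono[OF BB(3)] by blast
  have dL: "VS.dim L = 4"
  proof -
    have "VS.dim L = card (BB - BV)" unfolding L_def using VS.dim_span_eq_card_independent[OF iL] .
    also have "\<dots> = card BB - card BV" using card_Diff_subset[OF BV(5) BB(1)] .
    finally show ?thesis using cBB BV(4) V(3) n by simp
  qed
  have VL0: "V \<inter> L = {0}"
    using span_disj[OF fBB BB(3), of BV "BB - BV"] BB(1) spBV unfolding L_def by blast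
  have VLamb: "VS.span (V \<union> L) = amb n"
  proof
    show "VS.span (V \<union> L) \<subseteq> amb n" using span_sub_amb[of "V \<union> L" n] V(1) Lamb by blast
    have "BB \<subseteq> V \<union> L" using BV(1) BB(1) VS.span_superset[of "BB - BV"] unfolding L_def by blast
    then have "VS.span BB \<subseteq> VS.span (V \<union> L)" by (rule VS.span_mono)
    then show "amb n \<subseteq> VS.span (V \<union> L)" using BB(4) by blast
  qed
  have GW: "\<And>W. VS.subspace W \<Longrightarrow> V \<subseteq> W \<Longrightarrow> W \<subseteq> amb n \<Longrightarrow> VS.dim (W \<inter> L) + (n - 3) = VS.dim W"
  proof -
    fix W assume W: "VS.subspace W" "V \<subseteq> W" "W \<subseteq> amb n"
    have "VS.span (W \<union> L) = amb n"
    proof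
      show "VS.span (W \<union> L) \<subseteq> amb n" using span_sub_amb[of "W \<union> L" n] W(3) Lamb by blast
      have "VS.span (V \<union> L) \<subseteq> VS.span (W \<union> L)" using W(2) VS.span_mono[of "V \<union> L" "W \<union> L"] by blast
      then show "amb n \<subseteq> VS.span (W \<union> L)" using VLamb by simp
    qed
    then show "VS.dim (W \<inter> L) + (n - 3) = VS.dim W"
      using grass[OF W(3) W(1) Lamb Lsub] dL dim_amb n by simp
  qed
  define l where "l X = X \<inter> L" for X
  have dl: "\<And>X. X \<in> A \<Longrightarrow> VS.dim (l X) = 2"
  proof -
    fix X assume "X \<in> A"
    then have XX: "X \<subseteq> amb n" "VS.subspace X" "VS.dim X = n - 1" "V \<subseteq> X" using Amem[of X] VA by auto
    have "VS.dim (X \<inter> L) + (n - 3) = VS.dim X" by (rule GW[OF XX(2) XX(4) XX(1)])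
    then show "VS.dim (l X) = 2" using XX(3) n unfolding l_def by linarith
  qed
  have lsub: "\<And>X. X \<in> A \<Longrightarrow> VS.subspace (l X) \<and> l X \<subseteq> amb n \<and> l X \<subseteq> L"
    unfolding l_def using Amem Lsub VS.subspace_inter by blast
  have recon: "\<And>X. X \<in> A \<Longrightarrow> VS.span (V \<union> l X) = X"
  proof -
    fix X assume X: "X \<in> A"
    have XX: "X \<subseteq> amb n" "VS.subspace X" "VS.dim X = n - 1" using Amem[OF X] by auto
    have sub: "VS.span (V \<union> l X) \<subseteq> X"
      using VS.span_minimal[of "V \<union> l X" X] XX VA X unfolding l_def by blast
    have lX: "l X \<subseteq> amb n" "VS.subspace (l X)" using lsub[OF X] by auto
    have g: "VS.dim (VS.span (V \<union> l X)) + VS.dim (V \<inter> l X) = VS.dim V + VS.dim (l X)"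
      using grass[OF V(1) V(2) lX] .
    have "V \<inter> l X \<subseteq> {0}" using VL0 unfolding l_def by blast
    moreover have "{0::nat\<Rightarrow>complex} \<subseteq> amb n" by (simp add: amb_def)
    ultimately have "VS.dim (V \<inter> l X) \<le> VS.dim {0::nat\<Rightarrow>complex}" by (rule dim_mono)
    then have "VS.dim (V \<inter> l X) = 0" using dim_zero_space by simp
    then have "VS.dim (VS.span (V \<union> l X)) = n - 1" using g dl[OF X] V(3) n by simp
    then show "VS.span (V \<union> l X) = X"
      using dim_eq_sub[OF sub XX(1)] XX(3) by simp
  qed
  have linj: "inj_on l A"
  proof (rule inj_onI)
    fix X Y assume XY: "X \<in> A" "Y \<in> A" "l X = l Y"
    have "X = VS.span (V \<union> l X)" using recon[OF XY(1)] by (rule sym)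
    also have "\<dots> = VS.span (V \<union> l Y)" using XY(3) by (rule arg_cong)
    also have "\<dots> = Y" by (rule recon[OF XY(2)])
    finally show "X = Y" .
  qed
  define B where "B = l ` A"
  have finA: "finite A" using arr unfolding arrangement_def by blast
  have arrB: "arrangement L 2 B"
    unfolding arrangement_def
  proof (intro conjI ballI impI)
    show "finite B" unfolding B_def using finA by simp
  next
    fix X' assume "X' \<in> B"
    then obtain X where X: "X \<in> A" "X' = l X" unfolding B_def by blast
    show "X' \<subseteq> L" using lsub X by blast
    have "VS.dim X' = 2" using X dl by simp
    then show "has_vdim X' 2" using hv_iff[of X' n] lsub[OF X(1)] X(2) by simp
  next
    fix X' Y' assume "X' \<in> B" "Y' \<in> B" "X' \<noteq> Y'"
    then obtain X Y where X: "X \<in> A" "X' = l X" and Y: "Y \<in> A" "Y' = l Y" unfolding B_def by blast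
    have "X \<noteq> Y" using X Y \<open>X' \<noteq> Y'\<close> by blast
    show "\<not> X' \<subseteq> Y'"
    proof
      assume "X' \<subseteq> Y'"
      then have "VS.span (V \<union> l X) \<subseteq> VS.span (V \<union> l Y)" using X Y VS.span_mono[of "V \<union> l X" "V \<union> l Y"] by blast
      then have "X \<subseteq> Y" unfolding recon[OF X(1)] recon[OF Y(1)] .
      then show False using arr X Y \<open>X \<noteq> Y\<close> unfolding arrangement_def by blast
    qed
  qed
  obtain P Q where PQ: "P \<inter> Q = {}" "P \<union> Q = A" "finite P" "finite Q" "card P = a" "card Q = b"
    and E: "\<forall>X\<in>A. \<forall>Y\<in>A. X \<noteq> Y \<longrightarrow> (edge_codim2 n X Y \<longleftrightarrow> (X \<in> P \<and> Y \<in> Q) \<or> (X \<in> Q \<and> Y \<in> P))"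
    using iso unfolding iso_Kab_def by blast
  have PA: "P \<subseteq> A" and QA: "Q \<subseteq> A" using PQ(2) by auto
  have mem: "\<And>Z S. Z \<in> A \<Longrightarrow> S \<subseteq> A \<Longrightarrow> (l Z \<in> l ` S \<longleftrightarrow> Z \<in> S)"
    using linj by (simp add: inj_on_image_mem_iff)
  have isoB: "iso_Kab B edge_lines a b"
    unfolding iso_Kab_def
  proof (intro exI conjI)
    show "l ` P \<inter> l ` Q = {}" using linj PQ unfolding inj_on_def by blast
    show "l ` P \<union> l ` Q = B" unfolding B_def using PQ by blast
    show "finite (l ` P)" "finite (l ` Q)" using PQ by auto
    show "card (l ` P) = a" using card_image[OF inj_on_subset[OF linj]] PQ by blast
    show "card (l ` Q) = b" using card_image[OF inj_on_subset[OF linj]] PQ by blast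
    show "\<forall>X'\<in>B. \<forall>Y'\<in>B. X' \<noteq> Y' \<longrightarrow> (edge_lines X' Y' \<longleftrightarrow> (X' \<in> l ` P \<and> Y' \<in> l ` Q) \<or> (X' \<in> l ` Q \<and> Y' \<in> l ` P))"
    proof (intro ballI impI)
      fix X' Y' assume "X' \<in> B" "Y' \<in> B" "X' \<noteq> Y'"
      then obtain X Y where X: "X \<in> A" "X' = l X" and Y: "Y \<in> A" "Y' = l Y" unfolding B_def by blast
      have XY: "X \<noteq> Y" using X Y \<open>X' \<noteq> Y'\<close> by blast
      have XX: "X \<subseteq> amb n" "VS.subspace X" and YY: "VS.subspace Y" using Amem X Y by auto
      have mX: "X' \<in> l ` P \<longleftrightarrow> X \<in> P" "X' \<in> l ` Q \<longleftrightarrow> X \<in> Q"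
        using mem[OF X(1) PA] mem[OF X(1) QA] X(2) by simp_all
      have mY: "Y' \<in> l ` P \<longleftrightarrow> Y \<in> P" "Y' \<in> l ` Q \<longleftrightarrow> Y \<in> Q"
        using mem[OF Y(1) PA] mem[OF Y(1) QA] Y(2) by simp_all
      have "X' \<inter> Y' = (X \<inter> Y) \<inter> L" using X Y unfolding l_def by blast
      moreover have "VS.dim ((X \<inter> Y) \<inter> L) + (n - 3) = VS.dim (X \<inter> Y)"
      proof -
        have VXY: "V \<subseteq> X \<inter> Y" using VA X(1) Y(1) by blast
        have sXY: "VS.subspace (X \<inter> Y)" by (rule VS.subspace_inter[OF XX(2) YY])
        have "X \<inter> Y \<subseteq> amb n" using XX(1) by blast
        then show ?thesis by (rule GW[OF sXY VXY])
      qed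
      moreover have "X' \<subseteq> amb n" "VS.subspace X'" "VS.subspace Y'" using lsub X Y by auto
      ultimately have "edge_lines X' Y' \<longleftrightarrow> edge_codim2 n X Y"
        using edgel_iff[of X' n Y'] edge2_iff[OF XX YY] by (simp del: Int_assoc) linarith
      then show "edge_lines X' Y' \<longleftrightarrow> (X' \<in> l ` P \<and> Y' \<in> l ` Q) \<or> (X' \<in> l ` Q \<and> Y' \<in> l ` P)"
      proof -
        have "edge_codim2 n X Y \<longleftrightarrow> (X \<in> P \<and> Y \<in> Q) \<or> (X \<in> Q \<and> Y \<in> P)"
          using E X(1) Y(1) XY by blast
        then show ?thesis unfolding mX mY using \<open>edge_lines X' Y' \<longleftrightarrow> edge_codim2 n X Y\<close> by simp
      qed
    qed
  qed
  have Aeq: "A = {cspan (V \<union> l') | l'. l' \<in> B}"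
  proof
    show "A \<subseteq> {cspan (V \<union> l') | l'. l' \<in> B}"
    proof
      fix X assume X: "X \<in> A"
      then have "X = cspan (V \<union> l X) \<and> l X \<in> B" using recon[OF X] unfolding cspan_eq B_def by simp
      then show "X \<in> {cspan (V \<union> l') | l'. l' \<in> B}" by blast
    qed
    show "{cspan (V \<union> l') | l'. l' \<in> B} \<subseteq> A"
    proof
      fix Z assume "Z \<in> {cspan (V \<union> l') | l'. l' \<in> B}"
      then obtain l' where "l' \<in> B" "Z = cspan (V \<union> l')" by blast
      then obtain X where X: "X \<in> A" "Z = cspan (V \<union> l X)" unfolding B_def by blast
      then show "Z \<in> A" using recon[OF X(1)] unfolding cspan_eq by simp
    qed
  qed
  have hvV: "has_vdim V (n - 3)" using hv_iff[OF V(1) V(2)] V(3) by simp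
  have hvL: "has_vdim L 4" using hv_iff[OF Lamb Lsub] dL by simp
  have VL0': "V \<inter> L = {\<lambda>i. 0}" using VL0 by (simp add: zero_fun_def)
  show ?thesis
    apply (rule exI[of _ L], rule exI[of _ B])
    using V(1) hvV Lamb hvL VL0' arrB isoB Aeq by (intro conjI)
qed



lemma two_elems: "2 \<le> card Q \<Longrightarrow> \<exists>x\<in>Q. \<exists>y\<in>Q. x \<noteq> y"
proof -
  assume c: "2 \<le> card Q"
  then have "finite Q" by (metis card.infinite not_numeral_le_zero)
  then show ?thesis using c card_le_Suc0_iff_eq[of Q] by force
qed

theorem lemma2p2:
  fixes n a b :: nat and A :: "(nat \<Rightarrow> complex) set set"
  assumes "n \<ge> 3"
    and "a > 0" and "b > 0"
    and "(a \<le> b \<and> b \<le> 2) \<or> (2 \<le> a \<and> a \<le> b)"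
    and "arrangement (amb n) (n - 1) A"
    and "iso_Kab A (edge_codim2 n) a b"
  shows "\<exists>V \<Lambda> B. V \<subseteq> amb n \<and> has_vdim V (n - 3)
           \<and> \<Lambda> \<subseteq> amb n \<and> has_vdim \<Lambda> 4
           \<and> V \<inter> \<Lambda> = {\<lambda>i. 0}
           \<and> arrangement \<Lambda> 2 B
           \<and> iso_Kab B edge_lines a b
           \<and> A = {cspan (V \<union> l) | l. l \<in> B}"
proof -
  note n = assms(1) and arr = assms(5) and iso = assms(6)
  have Amem: "\<And>X. X \<in> A \<Longrightarrow> X \<subseteq> amb n \<and> VS.subspace X \<and> VS.dim X = n - 1"
  proof -
    fix X assume "X \<in> A"
    then have x: "X \<subseteq> amb n" and h: "has_vdim X (n - 1)" using arr unfolding arrangement_def by auto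
    have s: "VS.subspace X" by (rule hv_sub[OF h])
    have "n - 1 = VS.dim X" using hv_iff[OF x s] h by blast
    then show "X \<subseteq> amb n \<and> VS.subspace X \<and> VS.dim X = n - 1" using x s by simp
  qed
  obtain P Q where PQ: "P \<inter> Q = {}" "P \<union> Q = A" "finite P" "finite Q" "card P = a" "card Q = b"
    and E: "\<forall>X\<in>A. \<forall>Y\<in>A. X \<noteq> Y \<longrightarrow> (edge_codim2 n X Y \<longleftrightarrow> (X \<in> P \<and> Y \<in> Q) \<or> (X \<in> Q \<and> Y \<in> P))"
    using iso unfolding iso_Kab_def by blast
  have edge: "\<And>X Y. X \<in> A \<Longrightarrow> Y \<in> A \<Longrightarrow> X \<noteq> Y \<Longrightarrow>
      (n - 3 < VS.dim (X \<inter> Y) \<longleftrightarrow> (X \<in> P \<and> Y \<in> Q) \<or> (X \<in> Q \<and> Y \<in> P))"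
  proof -
    fix X Y assume h: "X \<in> A" "Y \<in> A" "X \<noteq> Y"
    have "edge_codim2 n X Y \<longleftrightarrow> n - 3 < VS.dim (X \<inter> Y)"
      using edge2_iff[of X n Y] Amem[OF h(1)] Amem[OF h(2)] by blast
    then show "(n - 3 < VS.dim (X \<inter> Y) \<longleftrightarrow> (X \<in> P \<and> Y \<in> Q) \<or> (X \<in> Q \<and> Y \<in> P))"
      using E h by blast
  qed
  have same: "\<And>X Y. X \<in> P \<Longrightarrow> Y \<in> P \<Longrightarrow> X \<noteq> Y \<Longrightarrow> VS.dim (X \<inter> Y) \<le> n - 3"
  proof -
    fix X Y assume "X \<in> P" "Y \<in> P" "X \<noteq> Y"
    then show "VS.dim (X \<inter> Y) \<le> n - 3" using edge[of X Y] PQ by auto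
  qed
  have sameQ: "\<And>X Y. X \<in> Q \<Longrightarrow> Y \<in> Q \<Longrightarrow> X \<noteq> Y \<Longrightarrow> VS.dim (X \<inter> Y) \<le> n - 3"
  proof -
    fix X Y assume "X \<in> Q" "Y \<in> Q" "X \<noteq> Y"
    then show "VS.dim (X \<inter> Y) \<le> n - 3" using edge[of X Y] PQ by auto
  qed
  have cross: "\<And>X Y. X \<in> P \<Longrightarrow> Y \<in> Q \<Longrightarrow> n - 2 \<le> VS.dim (Y \<inter> X)"
  proof -
    fix X Y assume XY: "X \<in> P" "Y \<in> Q"
    then have "X \<noteq> Y" using PQ by blast
    then have "n - 3 < VS.dim (Y \<inter> X)" using edge[of Y X] XY PQ by auto
    then show "n - 2 \<le> VS.dim (Y \<inter> X)" using n by linarith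
  qed
  have cross': "\<And>X Y. X \<in> P \<Longrightarrow> Y \<in> Q \<Longrightarrow> n - 2 \<le> VS.dim (X \<inter> Y)"
    using cross by (simp add: Int_commute)
  have "\<exists>V. V \<subseteq> amb n \<and> VS.subspace V \<and> VS.dim V = n - 3 \<and> (\<forall>X\<in>A. V \<subseteq> X)"
  proof (cases "b \<ge> 2")
    case True
    then obtain Y1 Y2 where Y: "Y1 \<in> Q" "Y2 \<in> Q" "Y1 \<noteq> Y2" using two_elems[of Q] True PQ(6) by blast
    have Y1: "Y1 \<subseteq> amb n" "VS.subspace Y1" "VS.dim Y1 = n - 1" using Amem Y PQ by blast+
    have Y2: "Y2 \<subseteq> amb n" "VS.subspace Y2" "VS.dim Y2 = n - 1" using Amem Y PQ by blast+
    define V where "V = Y1 \<inter> Y2"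
    have Vs: "V \<subseteq> amb n" "VS.subspace V" unfolding V_def using Y1 Y2 VS.subspace_inter[of Y1 Y2] by auto
    have dV: "VS.dim V = n - 3"
      using int_lower[OF Y1(1,2) Y2(1,2) Y1(3) Y2(3) n] sameQ[OF Y] unfolding V_def by linarith
    have VP: "\<And>X. X \<in> P \<Longrightarrow> V \<subseteq> X"
    proof -
      fix X assume X: "X \<in> P"
      have XX: "X \<subseteq> amb n" "VS.subspace X" "VS.dim X = n - 1" using Amem X PQ by blast+
      show "V \<subseteq> X" unfolding V_def
        using keyK[OF Y1(1,2) Y2(1,2) XX n sameQ[OF Y] cross'[OF X Y(1)] cross'[OF X Y(2)]] .
    qed
    have VQ: "\<And>Y. Y \<in> Q \<Longrightarrow> V \<subseteq> Y"
    proof -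
      fix Y assume YQ: "Y \<in> Q"
      show "V \<subseteq> Y"
      proof (cases "a \<ge> 2")
        case True
        then obtain X1 X2 where X: "X1 \<in> P" "X2 \<in> P" "X1 \<noteq> X2" using two_elems[of P] True PQ(5) by blast
        have X1: "X1 \<subseteq> amb n" "VS.subspace X1" using Amem X PQ by blast+
        have X2: "X2 \<subseteq> amb n" "VS.subspace X2" using Amem X PQ by blast+
        have YY: "Y \<subseteq> amb n" "VS.subspace Y" "VS.dim Y = n - 1" using Amem YQ PQ by blast+
        have "X1 \<inter> X2 \<subseteq> Y"
          using keyK[OF X1 X2 YY n same[OF X] cross[OF X(1) YQ] cross[OF X(2) YQ]] .
        then show ?thesis using VP X by blast
      next
        case False
        then have "b = 2" using assms(2,4) \<open>b \<ge> 2\<close> by linarith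
        then obtain x y where "Q = {x, y}" using PQ(6) card_2_iff[of Q] by auto
        then have "Q = {Y1, Y2}" using Y by blast
        then show ?thesis using YQ unfolding V_def by blast
      qed
    qed
    show ?thesis using Vs dV VP VQ PQ(2) by blast
  next
    case False
    then have ab: "a = 1" "b = 1" using assms(2,3,4) by linarith+
    have "card P = 1" "card Q = 1" using PQ(5,6) ab by auto
    then obtain X Y where XY: "P = {X}" "Q = {Y}" by (meson card_1_singletonE)
    then have XYA: "X \<in> A" "Y \<in> A" "X \<noteq> Y" using PQ by auto
    have XX: "X \<subseteq> amb n" "VS.subspace X" using Amem XYA by blast+
    have YY: "VS.subspace Y" using Amem XYA by blast+
    have "n - 2 \<le> VS.dim (X \<inter> Y)" using cross' XY by blast
    obtain I where I: "I \<subseteq> X \<inter> Y" "VS.independent I" "X \<inter> Y \<subseteq> VS.span I"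
      "card I = VS.dim (X \<inter> Y)" "finite I"
      using basis_fin[of "X \<inter> Y" n] XX by blast
    obtain I' where I': "I' \<subseteq> I" "card I' = n - 3" "finite I'"
    proof -
      have "n - 3 \<le> card I" using I(4) \<open>n - 2 \<le> VS.dim (X \<inter> Y)\<close> by linarith
      then show ?thesis using obtain_subset_with_card_n[of "n - 3" I] that by blast
    qed
    define V where "V = VS.span I'"
    have Vsub: "V \<subseteq> X \<inter> Y" unfolding V_def
      using VS.span_minimal[of I' "X \<inter> Y"] I I' XX YY VS.subspace_inter[of X Y] by blast
    have "VS.dim V = n - 3"
      unfolding V_def using VS.dim_span_eq_card_independent[OF VS.independent_mono[OF I(2) I'(1)]] I' by simp
    moreover have "V \<subseteq> amb n" using Vsub XX by blast
    moreover have "VS.subspace V" unfolding V_def by simp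
    moreover have "\<forall>Z\<in>A. V \<subseteq> Z" using Vsub XY PQ(2) by blast
    ultimately show ?thesis by blast
  qed
  then obtain V where V: "V \<subseteq> amb n" "VS.subspace V" "VS.dim V = n - 3" "\<forall>X\<in>A. V \<subseteq> X" by blast
  show ?thesis using cone[OF n V arr iso] by blast
qed


end
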